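(* Let $n$ be a natural number and let $P\subseteq S_n$ be a subset of the symmetric group with $|P|=6$ such that for all $I,J\subseteq[n]$ the set $\{\pi\in P\mid \pi(I)=J\}$ has cardinality $0$ or at least $2$, and has cardinality $0$ or exactly $2$ if $|I|=|J|=1$. Then $n=3$ and $P=S_3$. *)

theory Defs
  imports "HOL-Combinatorics.Permutations"
begin

end

theory Submission
  imports Defs
begin

lemma card2_other:
  assumes "card S = 2" "x \<in> S" shows "\<exists>y. S = {x,y} \<and> y \<noteq> x"
proof -
  obtain a b where S: "S = {a,b}" "a \<noteq> b" using assms(1) unfolding card_2_iff by blast
  have "x = a \<or> x = b" using S assms(2) by simp
  then show ?thesis
  proof
    assume "x = a" then show ?thesis using S by blast
  next
    assume "x = b" then have "S = {x,a} \<and> a \<noteq> x" using S by (simp add: insert_commute)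
    then show ?thesis by blast
  qed
qed

lemma ge2_other:
  assumes "finite S" "card S \<ge> 2" "x \<in> S" shows "\<exists>y\<in>S. y \<noteq> x"
proof (rule ccontr)
  assume "\<not> ?thesis"
  then have "S \<subseteq> {x}" by auto
  then have "card S \<le> card {x}" using card_mono[of "{x}" S] by simp
  with assms show False by simp
qed

lemma fibre_card:
  assumes "finite P" "\<forall>\<sigma>\<in>P. card {\<tau>\<in>P. \<tau> k = \<sigma> k} = 2"
  shows "card P = 2 * card ((\<lambda>\<sigma>. \<sigma> k) ` P)"
proof -
  have "card P = (\<Sum>y\<in>(\<lambda>\<sigma>. \<sigma> k) ` P. \<Sum>x\<in>{x\<in>P. x k = y}. (1::nat))"
    using sum.image_gen[OF assms(1), of "\<lambda>_. (1::nat)" "\<lambda>\<sigma>. \<sigma> k"] by simp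
  also have "\<dots> = (\<Sum>y\<in>(\<lambda>\<sigma>. \<sigma> k) ` P. 2)"
    by (rule sum.cong) (use assms(2) in auto)
  finally show ?thesis by simp
qed

theorem lemma3p4:
  fixes n :: nat and P :: "(nat \<Rightarrow> nat) set"
  assumes "\<forall>\<pi>\<in>P. \<pi> permutes {1..n}"
    and "card P = 6"
    and "\<forall>I J. I \<subseteq> {1..n} \<and> J \<subseteq> {1..n} \<longrightarrow>
           card {\<pi>\<in>P. \<pi> ` I = J} = 0 \<or> card {\<pi>\<in>P. \<pi> ` I = J} \<ge> 2"
    and "\<forall>I J. I \<subseteq> {1..n} \<and> J \<subseteq> {1..n} \<and> card I = 1 \<and> card J = 1 \<longrightarrow>
           card {\<pi>\<in>P. \<pi> ` I = J} = 0 \<or> card {\<pi>\<in>P. \<pi> ` I = J} = 2"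
  shows "n = 3 \<and> P = {\<pi>. \<pi> permutes {1..n}}"
proof -
  have finP: "finite P" using assms(2) by (metis card.infinite zero_neq_numeral)
  have perm: "\<And>\<sigma>. \<sigma>\<in>P \<Longrightarrow> \<sigma> permutes {1..n}" using assms(1) by blast
  have injP: "x = y" if "\<sigma>\<in>P" "\<sigma> x = \<sigma> y" for \<sigma> x y
    using injD[OF permutes_inj[OF perm[OF that(1)]] that(2)] .
  have single: "card {\<tau>\<in>P. \<tau> k = \<sigma> k} = 2" if k: "k\<in>{1..n}" and s: "\<sigma>\<in>P" for k \<sigma>
  proof -
    have sv: "\<sigma> k \<in> {1..n}" using permutes_in_image[OF perm[OF s]] k by simp
    have eq: "{\<tau>\<in>P. \<tau> ` {k} = {\<sigma> k}} = {\<tau>\<in>P. \<tau> k = \<sigma> k}" by auto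
    have "card {\<tau>\<in>P. \<tau> k = \<sigma> k} \<noteq> 0" using s finP by auto
    then show ?thesis using assms(4)[rule_format, of "{k}" "{\<sigma> k}"] k sv eq by auto
  qed
  have pair: "\<exists>\<sigma>\<in>P. \<sigma>\<noteq>\<pi> \<and> \<sigma> ` {i,c} = \<pi> ` {i,c}"
    if "i\<in>{1..n}" "c\<in>{1..n}" "\<pi>\<in>P" for i c \<pi>
  proof -
    have J: "\<pi> ` {i,c} \<subseteq> {1..n}" using permutes_in_image[OF perm[OF that(3)]] that(1,2) by auto
    have "card {\<sigma>\<in>P. \<sigma> ` {i,c} = \<pi> ` {i,c}} \<noteq> 0" using that(3) finP by auto
    then have "card {\<sigma>\<in>P. \<sigma> ` {i,c} = \<pi> ` {i,c}} \<ge> 2"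
      using assms(3)[rule_format, of "{i,c}" "\<pi> ` {i,c}"] J that by auto
    from ge2_other[OF _ this, of \<pi>] finP that(3) show ?thesis by auto
  qed
  have W3: "card ((\<lambda>\<sigma>. \<sigma> k) ` P) = 3" if "k\<in>{1..n}" for k
    using fibre_card[OF finP, of k] single[OF that] assms(2) by auto
  have main: "\<not> 4 \<le> n"
  proof
    assume n4: "4 \<le> n"
    obtain \<pi> where pP: "\<pi>\<in>P" using assms(2) by (metis card.empty ex_in_conv zero_neq_numeral)
    define i where "i = (1::nat)"
    have iI: "i \<in> {1..n}" using n4 by (simp add: i_def)
    have partner: "\<exists>\<rho>. {\<tau>\<in>P. \<tau> k = \<pi> k} = {\<pi>,\<rho>} \<and> \<rho> \<noteq> \<pi>" if "k\<in>{1..n}" for k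
      using single[OF that pP] card2_other[of "{\<tau>\<in>P. \<tau> k = \<pi> k}" \<pi>] pP by auto
    have claim1: "\<pi> c \<in> (\<lambda>\<sigma>. \<sigma> k) ` P - {\<pi> k}"
      if k: "k\<in>{1..n}" and S: "{\<tau>\<in>P. \<tau> k = \<pi> k} = {\<pi>,\<rho>}" and c: "c\<in>{1..n}"
        and ne: "\<rho> c \<noteq> \<pi> c" for k \<rho> c
    proof -
      have rP: "\<rho> \<in> P" "\<rho> k = \<pi> k" using S by auto
      have ck: "c \<noteq> k" using rP ne by auto
      obtain \<sigma> where sP: "\<sigma>\<in>P" "\<sigma>\<noteq>\<pi>" "\<sigma> ` {k,c} = \<pi> ` {k,c}" using pair[OF k c pP] by blast
      have pc: "\<pi> c \<noteq> \<pi> k" using injP[OF pP] ck by metis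
      have sc: "\<sigma> c \<noteq> \<sigma> k" using injP[OF sP(1)] ck by metis
      show ?thesis
      proof (cases "\<sigma> k = \<pi> k")
        case True
        then have "\<sigma> = \<rho>" using S sP by blast
        moreover have "\<sigma> c = \<pi> c" using sP(3) True sc by auto
        ultimately show ?thesis using ne by simp
      next
        case False
        then have "\<sigma> k = \<pi> c" using sP(3) by auto
        then have "\<pi> c \<in> (\<lambda>\<sigma>. \<sigma> k) ` P" using sP(1) by (metis image_eqI)
        then show ?thesis using pc by simp
      qed
    qed
    have Cbound: "card {c\<in>{1..n}. \<rho> c \<noteq> \<pi> c} \<le> 2"
      and Cimg: "\<pi> ` {c\<in>{1..n}. \<rho> c \<noteq> \<pi> c} \<subseteq> (\<lambda>\<sigma>. \<sigma> k) ` P - {\<pi> k}"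
      and Wc: "card ((\<lambda>\<sigma>. \<sigma> k) ` P - {\<pi> k}) = 2"
      if k: "k\<in>{1..n}" and S: "{\<tau>\<in>P. \<tau> k = \<pi> k} = {\<pi>,\<rho>}" for k \<rho>
    proof -
      show sub: "\<pi> ` {c\<in>{1..n}. \<rho> c \<noteq> \<pi> c} \<subseteq> (\<lambda>\<sigma>. \<sigma> k) ` P - {\<pi> k}"
        using claim1[OF k S] by auto
      show W: "card ((\<lambda>\<sigma>. \<sigma> k) ` P - {\<pi> k}) = 2"
        using W3[OF k] pP by (simp add: card_Diff_singleton)
      have "inj_on \<pi> {c\<in>{1..n}. \<rho> c \<noteq> \<pi> c}" using injP[OF pP] by (meson inj_onI)
      then have "card {c\<in>{1..n}. \<rho> c \<noteq> \<pi> c} = card (\<pi> ` {c\<in>{1..n}. \<rho> c \<noteq> \<pi> c})"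
        by (simp add: card_image)
      also have "\<dots> \<le> 2" using card_mono[OF _ sub] W finP by simp
      finally show "card {c\<in>{1..n}. \<rho> c \<noteq> \<pi> c} \<le> 2" .
    qed
    obtain \<rho> where r: "{\<tau>\<in>P. \<tau> i = \<pi> i} = {\<pi>,\<rho>}" "\<rho> \<noteq> \<pi>" using partner[OF iI] by blast
    have rP: "\<rho> \<in> P" using r by auto
    define A where "A = {c\<in>{1..n}. \<rho> c = \<pi> c}"
    define C where "C = {c\<in>{1..n}. \<rho> c \<noteq> \<pi> c}"
    have "C \<noteq> {}"
    proof
      assume "C = {}"
      then have "\<rho> x = \<pi> x" for x
        using permutes_not_in[OF perm[OF rP], of x] permutes_not_in[OF perm[OF pP], of x]
        unfolding C_def by (cases "x \<in> {1..n}") auto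
      then show False using r(2) by auto
    qed
    then obtain j where jC: "j \<in> C" by blast
    have jI: "j \<in> {1..n}" using jC C_def by auto
    obtain \<rho>' where r': "{\<tau>\<in>P. \<tau> j = \<pi> j} = {\<pi>,\<rho>'}" "\<rho>' \<noteq> \<pi>" using partner[OF jI] by blast
    have r'P: "\<rho>' \<in> P" "\<rho>' j = \<pi> j" using r' by auto
    have rr': "\<rho> \<noteq> \<rho>'" using jC r'P(2) C_def by auto
    define A' where "A' = {c\<in>{1..n}. \<rho>' c = \<pi> c}"
    define C' where "C' = {c\<in>{1..n}. \<rho>' c \<noteq> \<pi> c}"
    have disj: "A \<inter> A' = {}"
    proof (rule ccontr)
      assume "A \<inter> A' \<noteq> {}"
      then obtain k where kA: "k \<in> A" "k \<in> A'" by blast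
      then have kI: "k \<in> {1..n}" using A_def by auto
      have "{\<pi>,\<rho>,\<rho>'} \<subseteq> {\<tau>\<in>P. \<tau> k = \<pi> k}" using kA A_def A'_def pP rP r'P by auto
      moreover have "finite {\<tau>\<in>P. \<tau> k = \<pi> k}" using finP by simp
      ultimately have "card {\<pi>,\<rho>,\<rho>'} \<le> 2" using card_mono[of "{\<tau>\<in>P. \<tau> k = \<pi> k}" "{\<pi>,\<rho>,\<rho>'}"] single[OF kI pP]
        by simp
      then show False using r(2) r'(2) rr' by auto
    qed
    have AC': "A \<subseteq> C'" using disj A_def A'_def C'_def by auto
    have cC: "card C \<le> 2" using Cbound[OF iI r(1)] C_def by simp
    have cC': "card C' \<le> 2" using Cbound[OF jI r'(1)] C'_def by simp
    have finC': "finite C'" using C'_def by simp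
    have cA: "card A \<le> 2" using card_mono[OF finC' AC'] cC' by simp
    have "{1..n} = A \<union> C" "A \<inter> C = {}" using A_def C_def by auto
    then have "n = card A + card C" using card_Un_disjoint[of A C] A_def C_def
      by (metis card_atLeastAtMost diff_Suc_1 finite_Un finite_atLeastAtMost)
    then have cA2: "card A = 2" and cC2: "card C = 2" using n4 cA cC by auto
    have AeqC': "A = C'"
      using card_subset_eq[OF finC' AC'] cA2 cC' card_mono[OF finC' AC'] by simp
    have img: "\<pi> ` C = (\<lambda>\<sigma>. \<sigma> i) ` P - {\<pi> i}"
    proof (rule card_subset_eq)
      show "finite ((\<lambda>\<sigma>. \<sigma> i) ` P - {\<pi> i})" using finP by simp
      show "\<pi> ` C \<subseteq> (\<lambda>\<sigma>. \<sigma> i) ` P - {\<pi> i}" using Cimg[OF iI r(1)] C_def by simp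
      have "inj_on \<pi> C" using injP[OF pP] by (meson inj_onI)
      then show "card (\<pi> ` C) = card ((\<lambda>\<sigma>. \<sigma> i) ` P - {\<pi> i})"
        using Wc[OF iI r(1)] cC2 by (simp add: card_image)
    qed
    have iA: "i \<in> A" using iI r(1) A_def by auto
    then have "i \<notin> A'" using disj by auto
    then have "\<rho>' i \<noteq> \<pi> i" using iI A'_def by auto
    then have "\<rho>' i \<in> \<pi> ` C" using img r'P(1) by auto
    then obtain c where c: "c \<in> C" "\<rho>' i = \<pi> c" by blast
    have "c \<notin> C'" using c(1) AeqC' A_def C_def by auto
    then have "c \<in> A'" using c(1) C_def A'_def C'_def by auto
    then have "\<rho>' c = \<rho>' i" using c(2) A'_def by auto
    then have "c = i" using injP[OF r'P(1)] by metis
    then show False using c(1) iA A_def C_def by auto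
  qed
  have Psub: "P \<subseteq> {\<pi>. \<pi> permutes {1..n}}" using perm by blast
  have cS: "card {\<pi>. \<pi> permutes {1..n}} = fact n" using card_permutations[of "{1..n}" n] by simp
  have finS: "finite {\<pi>. \<pi> permutes {1..n}}" using finite_permutations by blast
  have "6 \<le> (fact n :: nat)" using card_mono[OF finS Psub] assms(2) cS by simp
  moreover have "n \<le> 3" using main by simp
  ultimately have n3: "n = 3"
  proof -
    assume a: "6 \<le> (fact n :: nat)" "n \<le> 3"
    have "\<not> n \<le> 2"
    proof
      assume "n \<le> 2"
      then have "fact n \<le> (fact 2 :: nat)" by (rule fact_mono)
      with a show False by (simp add: numeral_2_eq_2)
    qed
    with a show "n = 3" by linarith
  qed
  have "P = {\<pi>. \<pi> permutes {1..n}}"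
    using card_subset_eq[OF finS Psub] assms(2) cS n3 by (simp add: fact_numeral)
  with n3 show ?thesis by simp
qed

end
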